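(* Let $G$ be a finite graph and let $(\mathcal{P}_1,R_1),\dots,(\mathcal{P}_m,R_m)$ be a minimal merge sequence for $G$. Let $i\in\{1,\dots,m\}$, let $X,Y\in\mathcal{P}_i$ (possibly $X=Y$), and let $x_1,x_2\in X$ and $y_1,y_2\in Y$ be such that $\{x_1,y_1\}$ and $\{x_2,y_2\}$ are pairs of distinct vertices which are both not in $R_i$. Then for every $j\in\{1,\dots,m\}$, the pairs $\{x_1,y_1\}$ and $\{x_2,y_2\}$ are either both in $R_j$ or both not in $R_j$.
   Context: A merge sequence for a graph $G=(V,E)$ is a sequence $(\mathcal{P}_1,R_1),\dots,(\mathcal{P}_m,R_m)$ where: (1) each $\mathcal{P}_i$ is a partition of $V$, $\mathcal{P}_1$ is the partition into singletons, $\mathcal{P}_m=\{V\}$, and each part of $\mathcal{P}_i$ is a union of parts of $\mathcal{P}_{i-1}$; (2) $R_1\subseteq\dots\subseteq R_m\subseteq\binom{V}{2}$ are sets of unordered pairs of distinct vertices (resolved pairs); (3) for any two (possibly equal) parts $A,B\in\mathcal{P}_i$, the pairs $\{a,b\}$ with $a\in A$, $b\in B$, $a\neq b$, not in $R_i$ are either all edges or all non-edges of $G$. A merge sequence is minimal for $G$ if there is no different sequence $R'_1,\dots,R'_m$ such that $(\mathcal{P}_1,R'_1),\dots,(\mathcal{P}_m,R'_m)$ is a merge sequence for $G$ and $R'_i\subseteq R_i$ for all $i$. *)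

theory Defs
  imports Main "HOL-Library.Disjoint_Sets"
begin

(* A merge sequence of length m is indexed by 1..m: P i is the partition, R i the
   set of resolved pairs at step i. *)

definition graph :: "'a set \<Rightarrow> ('a \<Rightarrow> 'a \<Rightarrow> bool) \<Rightarrow> bool" where
  "graph V E \<longleftrightarrow> (\<forall>u v. E u v \<longrightarrow> u \<in> V \<and> v \<in> V) \<and> (\<forall>u v. E u v \<longrightarrow> E v u) \<and> (\<forall>v. \<not> E v v)"

definition vpairs :: "'a set \<Rightarrow> 'a set set" where
  "vpairs V = {{a, b} | a b. a \<in> V \<and> b \<in> V \<and> a \<noteq> b}"

definition merge_sequence ::
  "'a set \<Rightarrow> ('a \<Rightarrow> 'a \<Rightarrow> bool) \<Rightarrow> nat \<Rightarrow> (nat \<Rightarrow> 'a set set) \<Rightarrow> (nat \<Rightarrow> 'a set set) \<Rightarrow> bool" where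
  "merge_sequence V E m P R \<longleftrightarrow>
     m \<ge> 1 \<and>
     (\<forall>i\<in>{1..m}. partition_on V (P i)) \<and>
     P 1 = (\<lambda>v. {v}) ` V \<and>
     P m = {V} \<and>
     (\<forall>i\<in>{2..m}. \<forall>A\<in>P i. \<exists>S\<subseteq>P (i - 1). A = \<Union>S) \<and>
     (\<forall>i\<in>{1..m}. R i \<subseteq> vpairs V) \<and>
     (\<forall>i\<in>{2..m}. R (i - 1) \<subseteq> R i) \<and>
     (\<forall>i\<in>{1..m}. \<forall>A\<in>P i. \<forall>B\<in>P i.
        (\<forall>a\<in>A. \<forall>b\<in>B. a \<noteq> b \<and> {a, b} \<notin> R i \<longrightarrow> E a b) \<or>
        (\<forall>a\<in>A. \<forall>b\<in>B. a \<noteq> b \<and> {a, b} \<notin> R i \<longrightarrow> \<not> E a b))"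

definition minimal_merge_sequence ::
  "'a set \<Rightarrow> ('a \<Rightarrow> 'a \<Rightarrow> bool) \<Rightarrow> nat \<Rightarrow> (nat \<Rightarrow> 'a set set) \<Rightarrow> (nat \<Rightarrow> 'a set set) \<Rightarrow> bool" where
  "minimal_merge_sequence V E m P R \<longleftrightarrow>
     merge_sequence V E m P R \<and>
     \<not> (\<exists>R'. merge_sequence V E m P R' \<and> (\<forall>i\<in>{1..m}. R' i \<subseteq> R i) \<and>
             (\<exists>i\<in>{1..m}. R' i \<noteq> R i))"

end

theory Submission
  imports Defs
begin

lemma ms_D:
  assumes "merge_sequence V E m P R"
  shows "1 \<le> m" "\<forall>i\<in>{1..m}. partition_on V (P i)"
    "P 1 = (\<lambda>v. {v}) ` V" "P m = {V}"
    "\<forall>i\<in>{2..m}. \<forall>A\<in>P i. \<exists>S\<subseteq>P (i - 1). A = \<Union>S"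
    "\<forall>i\<in>{1..m}. R i \<subseteq> vpairs V"
    "\<forall>i\<in>{2..m}. R (i - 1) \<subseteq> R i"
    "\<forall>i\<in>{1..m}. \<forall>A\<in>P i. \<forall>B\<in>P i.
        (\<forall>a\<in>A. \<forall>b\<in>B. a \<noteq> b \<and> {a, b} \<notin> R i \<longrightarrow> E a b) \<or>
        (\<forall>a\<in>A. \<forall>b\<in>B. a \<noteq> b \<and> {a, b} \<notin> R i \<longrightarrow> \<not> E a b)"
  apply (rule assms[unfolded merge_sequence_def, THEN conjunct1])
  apply (rule assms[unfolded merge_sequence_def, THEN conjunct2, THEN conjunct1])
  apply (rule assms[unfolded merge_sequence_def, THEN conjunct2, THEN conjunct2, THEN conjunct1])
  apply (rule assms[unfolded merge_sequence_def, THEN conjunct2, THEN conjunct2, THEN conjunct2, THEN conjunct1])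
  apply (rule assms[unfolded merge_sequence_def, THEN conjunct2, THEN conjunct2, THEN conjunct2, THEN conjunct2, THEN conjunct1])
  apply (rule assms[unfolded merge_sequence_def, THEN conjunct2, THEN conjunct2, THEN conjunct2, THEN conjunct2, THEN conjunct2, THEN conjunct1])
  apply (rule assms[unfolded merge_sequence_def, THEN conjunct2, THEN conjunct2, THEN conjunct2, THEN conjunct2, THEN conjunct2, THEN conjunct2, THEN conjunct1])
  apply (rule assms[unfolded merge_sequence_def, THEN conjunct2, THEN conjunct2, THEN conjunct2, THEN conjunct2, THEN conjunct2, THEN conjunct2, THEN conjunct2])
  done

lemma ms_mono:
  assumes ms: "merge_sequence V E m P R" and "1 \<le> k" and "k \<le> l" and "l \<le> m"
  shows "R k \<subseteq> R l"
proof -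
  have mono: "\<And>n. n \<in> {2..m} \<Longrightarrow> R (n - 1) \<subseteq> R n" using ms_D(7)[OF ms] by blast
  have "l \<le> m \<longrightarrow> R k \<subseteq> R l" using \<open>k \<le> l\<close>
  proof (induction l rule: dec_induct)
    case base then show ?case by simp
  next
    case (step n)
    show ?case
    proof
      assume "Suc n \<le> m"
      then have "R n \<subseteq> R (Suc n)" using mono[of "Suc n"] step(1) assms(2) by auto
      then show "R k \<subseteq> R (Suc n)" using step \<open>Suc n \<le> m\<close> by auto
    qed
  qed
  then show ?thesis using assms by blast
qed

lemma part_unique:
  assumes "partition_on V Q" "A \<in> Q" "B \<in> Q" "x \<in> A" "x \<in> B"
  shows "A = B"
  using assms unfolding partition_on_def disjoint_def by blast

lemma ms_refine:
  assumes ms: "merge_sequence V E m P R" and "1 \<le> i" and "X \<in> P i" and "i \<le> k" and "k \<le> m"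
  shows "\<exists>A\<in>P k. X \<subseteq> A"
proof -
  have part: "\<And>n. n \<in> {1..m} \<Longrightarrow> partition_on V (P n)" using ms_D(2)[OF ms] by blast
  have un: "\<And>n A. n \<in> {2..m} \<Longrightarrow> A \<in> P n \<Longrightarrow> \<exists>S\<subseteq>P (n - 1). A = \<Union>S"
    using ms_D(5)[OF ms] by blast
  have "k \<le> m \<longrightarrow> (\<exists>A\<in>P k. X \<subseteq> A)" using \<open>i \<le> k\<close>
  proof (induction k rule: dec_induct)
    case base then show ?case using assms by auto
  next
    case (step n)
    show ?case
    proof
      assume nm: "Suc n \<le> m"
      then obtain A where A: "A \<in> P n" "X \<subseteq> A" using step by auto
      have pn: "partition_on V (P n)" using part[of n] step(1) assms(2) nm by auto
      have ps: "partition_on V (P (Suc n))" using part[of "Suc n"] nm by auto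
      have "A \<noteq> {}" using pn A unfolding partition_on_def by auto
      then obtain a where a: "a \<in> A" by blast
      have "\<Union>(P n) = V" using pn unfolding partition_on_def by auto
      then have "a \<in> V" using A a by blast
      then obtain B where B: "B \<in> P (Suc n)" "a \<in> B" using ps unfolding partition_on_def by blast
      obtain S where S: "S \<subseteq> P n" "B = \<Union>S" using un[of "Suc n" B] B nm step(1) assms(2) by auto
      then obtain C where C: "C \<in> S" "a \<in> C" using B by auto
      then have "C = A" using part_unique[OF pn _ A(1) _ a] S by auto
      then have "X \<subseteq> B" using C S A by auto
      then show "\<exists>A\<in>P (Suc n). X \<subseteq> A" using B by auto
    qed
  qed
  then show ?thesis using assms by blast
qed

lemma key:
  fixes V :: "'a set" and E :: "'a \<Rightarrow> 'a \<Rightarrow> bool"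
    and m :: nat and P R :: "nat \<Rightarrow> 'a set set"
  assumes g: "graph V E"
    and mm: "minimal_merge_sequence V E m P R"
    and i: "i \<in> {1..m}" and X: "X \<in> P i" and Y: "Y \<in> P i"
    and "x1 \<in> X" and "x2 \<in> X" and "y1 \<in> Y" and "y2 \<in> Y"
    and "x1 \<noteq> y1" and "x2 \<noteq> y2"
    and e1i: "{x1, y1} \<notin> R i" and e2i: "{x2, y2} \<notin> R i"
    and j: "j \<in> {1..m}" and e1j: "{x1, y1} \<in> R j" and e2j: "{x2, y2} \<notin> R j"
  shows False
proof -
  have ms: "merge_sequence V E m P R" using mm unfolding minimal_merge_sequence_def by blast
  have sym: "\<And>u v. E u v = E v u" using g unfolding graph_def by blast
  have part: "\<And>n. n \<in> {1..m} \<Longrightarrow> partition_on V (P n)" using ms_D(2)[OF ms] by blast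
  have hom: "\<And>k A B. k \<in> {1..m} \<Longrightarrow> A \<in> P k \<Longrightarrow> B \<in> P k \<Longrightarrow>
        (\<forall>a\<in>A. \<forall>b\<in>B. a \<noteq> b \<and> {a, b} \<notin> R k \<longrightarrow> E a b) \<or>
        (\<forall>a\<in>A. \<forall>b\<in>B. a \<noteq> b \<and> {a, b} \<notin> R k \<longrightarrow> \<not> E a b)"
    using ms_D(8)[OF ms] by blast
  have Eeq: "E x1 y1 = E x2 y2"
  proof -
    note xs = \<open>x1 \<in> X\<close> \<open>x2 \<in> X\<close> \<open>y1 \<in> Y\<close> \<open>y2 \<in> Y\<close> \<open>x1 \<noteq> y1\<close> \<open>x2 \<noteq> y2\<close>
    from hom[OF i X Y] show ?thesis
    proof
      assume H: "\<forall>a\<in>X. \<forall>b\<in>Y. a \<noteq> b \<and> {a, b} \<notin> R i \<longrightarrow> E a b"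
      have "E x1 y1" using H xs e1i by blast
      moreover have "E x2 y2" using H xs e2i by blast
      ultimately show ?thesis by simp
    next
      assume H: "\<forall>a\<in>X. \<forall>b\<in>Y. a \<noteq> b \<and> {a, b} \<notin> R i \<longrightarrow> \<not> E a b"
      have "\<not> E x1 y1" using H xs e1i by blast
      moreover have "\<not> E x2 y2" using H xs e2i by blast
      ultimately show ?thesis by simp
    qed
  qed
  define R' where "R' k = (if {x2, y2} \<notin> R k then R k - {{x1, y1}} else R k)" for k
  have sub: "\<And>k. R' k \<subseteq> R k" unfolding R'_def by auto
  have neq: "R' j \<noteq> R j" unfolding R'_def using e1j e2j by auto
  from ms have c1: "1 \<le> m" and c2: "\<forall>i\<in>{1..m}. partition_on V (P i)"
    and c3: "P 1 = (\<lambda>v. {v}) ` V" and c4: "P m = {V}"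
    and c5: "\<forall>i\<in>{2..m}. \<forall>A\<in>P i. \<exists>S\<subseteq>P (i - 1). A = \<Union>S"
    and c6: "\<forall>i\<in>{1..m}. R i \<subseteq> vpairs V"
    and c7: "\<forall>i\<in>{2..m}. R (i - 1) \<subseteq> R i"
    using ms_D[OF ms] by -
  have "merge_sequence V E m P R'"
    unfolding merge_sequence_def
  proof (intro conjI)
    show "1 \<le> m" "\<forall>i\<in>{1..m}. partition_on V (P i)" "P 1 = (\<lambda>v. {v}) ` V" "P m = {V}"
      "\<forall>i\<in>{2..m}. \<forall>A\<in>P i. \<exists>S\<subseteq>P (i - 1). A = \<Union> S"
      using c1 c2 c3 c4 c5 by -
    show "\<forall>i\<in>{1..m}. R' i \<subseteq> vpairs V"
      using c6 sub by blast
    show "\<forall>i\<in>{2..m}. R' (i - 1) \<subseteq> R' i"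
    proof
      fix k assume k: "k \<in> {2..m}"
      have "R (k - 1) \<subseteq> R k" using c7 k by blast
      then show "R' (k - 1) \<subseteq> R' k" unfolding R'_def by auto
    qed
  next
    show "\<forall>k\<in>{1..m}. \<forall>A\<in>P k. \<forall>B\<in>P k.
        (\<forall>a\<in>A. \<forall>b\<in>B. a \<noteq> b \<and> {a, b} \<notin> R' k \<longrightarrow> E a b) \<or>
        (\<forall>a\<in>A. \<forall>b\<in>B. a \<noteq> b \<and> {a, b} \<notin> R' k \<longrightarrow> \<not> E a b)"
    proof (intro ballI)
    fix k A B assume k: "k \<in> {1..m}" and A: "A \<in> P k" and B: "B \<in> P k"
    show "(\<forall>a\<in>A. \<forall>b\<in>B. a \<noteq> b \<and> {a, b} \<notin> R' k \<longrightarrow> E a b) \<or>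
          (\<forall>a\<in>A. \<forall>b\<in>B. a \<noteq> b \<and> {a, b} \<notin> R' k \<longrightarrow> \<not> E a b)"
    proof (cases "{x2, y2} \<notin> R k \<and> {x1, y1} \<in> R k")
      case False
      then have "R' k = R k" unfolding R'_def by auto
      then show ?thesis using hom[OF k A B] by simp
    next
      case True
      have ik: "i \<le> k"
      proof (rule ccontr)
        assume "\<not> i \<le> k"
        then have "R k \<subseteq> R i" using ms_mono[OF ms] k i by auto
        then show False using True e1i by auto
      qed
      obtain CX where CX: "CX \<in> P k" "X \<subseteq> CX" using ms_refine[OF ms _ X ik] i k by auto
      obtain CY where CY: "CY \<in> P k" "Y \<subseteq> CY" using ms_refine[OF ms _ Y ik] i k by auto
      have pk: "partition_on V (P k)" using part k by auto
      have R'k: "R' k = R k - {{x1, y1}}" using True unfolding R'_def by auto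
      have cl: "\<And>a b. a \<in> A \<Longrightarrow> b \<in> B \<Longrightarrow> a \<noteq> b \<and> {a, b} \<notin> R' k \<Longrightarrow>
         (a \<noteq> b \<and> {a, b} \<notin> R k) \<or> (a = x1 \<and> b = y1 \<and> x2 \<in> A \<and> y2 \<in> B)
          \<or> (a = y1 \<and> b = x1 \<and> y2 \<in> A \<and> x2 \<in> B)"
      proof -
        fix a b assume ab: "a \<in> A" "b \<in> B" "a \<noteq> b \<and> {a, b} \<notin> R' k"
        show "(a \<noteq> b \<and> {a, b} \<notin> R k) \<or> (a = x1 \<and> b = y1 \<and> x2 \<in> A \<and> y2 \<in> B)
          \<or> (a = y1 \<and> b = x1 \<and> y2 \<in> A \<and> x2 \<in> B)"
        proof (cases "{a, b} = {x1, y1}")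
          case False then show ?thesis using ab R'k by auto
        next
          case True
          then have "(a = x1 \<and> b = y1) \<or> (a = y1 \<and> b = x1)" by (simp add: doubleton_eq_iff)
          then show ?thesis
          proof
            assume h: "a = x1 \<and> b = y1"
            have "A = CX" using part_unique[OF pk A CX(1)] h ab CX \<open>x1 \<in> X\<close> by blast
            moreover have "B = CY" using part_unique[OF pk B CY(1)] h ab CY \<open>y1 \<in> Y\<close> by blast
            ultimately show ?thesis using h CX CY \<open>x2 \<in> X\<close> \<open>y2 \<in> Y\<close> by blast
          next
            assume h: "a = y1 \<and> b = x1"
            have "A = CY" using part_unique[OF pk A CY(1)] h ab CY \<open>y1 \<in> Y\<close> by blast
            moreover have "B = CX" using part_unique[OF pk B CX(1)] h ab CX \<open>x1 \<in> X\<close> by blast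
            ultimately show ?thesis using h CX CY \<open>x2 \<in> X\<close> \<open>y2 \<in> Y\<close> by blast
          qed
        qed
      qed
      have e2k: "{y2, x2} \<notin> R k" using True by (simp add: insert_commute)
      from hom[OF k A B] show ?thesis
      proof
        assume H: "\<forall>a\<in>A. \<forall>b\<in>B. a \<noteq> b \<and> {a, b} \<notin> R k \<longrightarrow> E a b"
        show ?thesis
        proof (rule disjI1, intro ballI impI)
          fix a b assume ab: "a \<in> A" "b \<in> B" "a \<noteq> b \<and> {a, b} \<notin> R' k"
          from cl[OF ab] show "E a b"
          proof (elim disjE conjE)
            assume "a \<noteq> b" "{a, b} \<notin> R k" then show ?thesis using H ab by blast
          next
            assume "a = x1" "b = y1" "x2 \<in> A" "y2 \<in> B"
            then show ?thesis using H True \<open>x2 \<noteq> y2\<close> Eeq by auto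
          next
            assume "a = y1" "b = x1" "y2 \<in> A" "x2 \<in> B"
            then show ?thesis using H e2k \<open>x2 \<noteq> y2\<close> Eeq sym[of y1 x1] sym[of y2 x2] by auto
          qed
        qed
      next
        assume H: "\<forall>a\<in>A. \<forall>b\<in>B. a \<noteq> b \<and> {a, b} \<notin> R k \<longrightarrow> \<not> E a b"
        show ?thesis
        proof (rule disjI2, intro ballI impI)
          fix a b assume ab: "a \<in> A" "b \<in> B" "a \<noteq> b \<and> {a, b} \<notin> R' k"
          from cl[OF ab] show "\<not> E a b"
          proof (elim disjE conjE)
            assume "a \<noteq> b" "{a, b} \<notin> R k" then show ?thesis using H ab by blast
          next
            assume "a = x1" "b = y1" "x2 \<in> A" "y2 \<in> B"
            then show ?thesis using H True \<open>x2 \<noteq> y2\<close> Eeq by auto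
          next
            assume "a = y1" "b = x1" "y2 \<in> A" "x2 \<in> B"
            then show ?thesis using H e2k \<open>x2 \<noteq> y2\<close> Eeq sym[of y1 x1] sym[of y2 x2] by auto
          qed
        qed
      qed
    qed
  qed
  qed
  then show False using mm sub neq j unfolding minimal_merge_sequence_def by blast
qed

theorem lemma2p1:
  fixes V :: "'a set" and E :: "'a \<Rightarrow> 'a \<Rightarrow> bool"
    and m :: nat and P R :: "nat \<Rightarrow> 'a set set"
  assumes "finite V" and "graph V E"
    and "minimal_merge_sequence V E m P R"
    and "i \<in> {1..m}" and "X \<in> P i" and "Y \<in> P i"
    and "x1 \<in> X" and "x2 \<in> X" and "y1 \<in> Y" and "y2 \<in> Y"
    and "x1 \<noteq> y1" and "x2 \<noteq> y2"
    and "{x1, y1} \<notin> R i" and "{x2, y2} \<notin> R i"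
  shows "\<forall>j\<in>{1..m}. ({x1, y1} \<in> R j \<longleftrightarrow> {x2, y2} \<in> R j)"
proof
  fix j assume j: "j \<in> {1..m}"
  show "({x1, y1} \<in> R j \<longleftrightarrow> {x2, y2} \<in> R j)"
  proof
    assume "{x1, y1} \<in> R j"
    then show "{x2, y2} \<in> R j"
      using key[OF assms(2,3,4,5,6,7,8,9,10,11,12,13,14) j] by blast
  next
    assume "{x2, y2} \<in> R j"
    then show "{x1, y1} \<in> R j"
      using key[OF assms(2,3,4,5,6,8,7,10,9,12,11,14,13) j] by blast
  qed
qed

end
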